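(* Let $(G,\sigma)$ be a vertex-oriented 4-regular plane graph and let $v$ be a cut-vertex of $G$ that is not a loop-anchor, such that $G-v$ has exactly two components $H_1,H_2$, and such that $v$ is oriented transversely by $\sigma$. For $i=1,2$, let $G_i$ be the graph obtained from $H_i$ by adding a new edge joining the endpoints in $H_i$ of the two edges from $v$ to $H_i$ (a loop if these endpoints coincide), and let $\sigma_i$ be the vertex-orientation of $G_i$ obtained from $\sigma$ by letting the new edge take the place of the edges from $v$ (this is the graph obtained by "smoothing" $v$). Let $k\ge 2$. If $(G_1,\sigma_1)$ and $(G_2,\sigma_2)$ admit $k$-o-colourings, then $(G,\sigma)$ admits a $k$-o-colouring.
   Context: Graphs may have loops and multiple edges. A 4-regular plane graph has a fixed planar embedding giving a cyclic (embedding) order of the four edge-ends at each vertex. A loop-anchor is a vertex incident with a loop. Orientation of a vertex $v$: if $v$ has no loop, a partition of its four edges into two cells of two edges, each cell consisting of two edges consecutive in the embedding order at $v$; if $v$ has exactly one loop $e$ and other edges $f,g$, either the transverse orientation $\{\{e,f\},\{e,g\}\}$ or the nontransverse orientation $\{\{f,g\},\{e\}\}$; if $v$ has two loops $e_1,e_2$, the single (transverse) orientation $\{\{e_1,e_2\}\}$. A vertex-orientation assigns an orientation to each vertex. For a cut-vertex $v$ that is not a loop-anchor with $G-v$ having components $H_1,H_2$, each $H_i$ is joined to $v$ by exactly two edges, which are consecutive in the embedding order at $v$; the orientation of $v$ is nontransverse if its cells are these two pairs, and transverse otherwise. An o-colouring of $(G,\sigma)$ is an assignment of colours to edges such that at every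 vertex $v$ exactly two distinct colours appear on its incident edges and each cell of $\sigma(v)$ contains edges of both colours; a $k$-o-colouring uses at most $k$ colours. *)

theory Defs
  imports Main
begin

text \<open>
Multigraphs with loops: vertex set V, edge set E, and for every edge e its two
ends, ends e True and ends e False (a loop has both ends at the same vertex).  The embedding is given combinatorially by a
rotation system rot, a permutation of the darts which at every vertex is a single
cyclic permutation of the darts at that vertex (the embedding order).  Faces are
the orbits of rot composed with the dart flip; the embedding is plane iff Euler's
formula V - E + F = 2 (number of components) holds.
\<close>

definition darts :: "'e set \<Rightarrow> ('e \<times> bool) set" where
  "darts E = E \<times> UNIV"

definition dart_vertex :: "('e \<Rightarrow> bool \<Rightarrow> 'v) \<Rightarrow> 'e \<times> bool \<Rightarrow> 'v" where
  "dart_vertex ends d = ends (fst d) (snd d)"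

definition darts_at :: "'e set \<Rightarrow> ('e \<Rightarrow> bool \<Rightarrow> 'v) \<Rightarrow> 'v \<Rightarrow> ('e \<times> bool) set" where
  "darts_at E ends v = {d \<in> darts E. dart_vertex ends d = v}"

definition flip :: "'e \<times> bool \<Rightarrow> 'e \<times> bool" where
  "flip d = (fst d, \<not> snd d)"

definition incident :: "'e set \<Rightarrow> ('e \<Rightarrow> bool \<Rightarrow> 'v) \<Rightarrow> 'v \<Rightarrow> 'e set" where
  "incident E ends v = {e \<in> E. \<exists>b. ends e b = v}"

definition loops_at :: "'e set \<Rightarrow> ('e \<Rightarrow> bool \<Rightarrow> 'v) \<Rightarrow> 'v \<Rightarrow> 'e set" where
  "loops_at E ends v = {e \<in> E. ends e True = v \<and> ends e False = v}"

definition is_graph :: "'v set \<Rightarrow> 'e set \<Rightarrow> ('e \<Rightarrow> bool \<Rightarrow> 'v) \<Rightarrow> bool" where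
  "is_graph V E ends \<longleftrightarrow> finite V \<and> finite E \<and> (\<forall>e\<in>E. \<forall>b. ends e b \<in> V)"

definition four_regular :: "'v set \<Rightarrow> 'e set \<Rightarrow> ('e \<Rightarrow> bool \<Rightarrow> 'v) \<Rightarrow> bool" where
  "four_regular V E ends \<longleftrightarrow> (\<forall>v\<in>V. card (darts_at E ends v) = 4)"

definition conn_rel :: "'e set \<Rightarrow> ('e \<Rightarrow> bool \<Rightarrow> 'v) \<Rightarrow> ('v \<times> 'v) set" where
  "conn_rel E' ends = {(ends e True, ends e False) | e. e \<in> E'} \<union> {(ends e False, ends e True) | e. e \<in> E'}"

definition components :: "'v set \<Rightarrow> 'e set \<Rightarrow> ('e \<Rightarrow> bool \<Rightarrow> 'v) \<Rightarrow> 'v set set" where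
  "components V' E' ends = (\<lambda>u. {w \<in> V'. (u, w) \<in> (conn_rel E' ends)\<^sup>*}) ` V'"

definition components_del :: "'v set \<Rightarrow> 'e set \<Rightarrow> ('e \<Rightarrow> bool \<Rightarrow> 'v) \<Rightarrow> 'v \<Rightarrow> 'v set set" where
  "components_del V E ends v = components (V - {v}) (E - incident E ends v) ends"

definition cut_vertex :: "'v set \<Rightarrow> 'e set \<Rightarrow> ('e \<Rightarrow> bool \<Rightarrow> 'v) \<Rightarrow> 'v \<Rightarrow> bool" where
  "cut_vertex V E ends v \<longleftrightarrow> v \<in> V \<and>
     card (components_del V E ends v) > card (components V E ends)"

definition rotation_system :: "'v set \<Rightarrow> 'e set \<Rightarrow> ('e \<Rightarrow> bool \<Rightarrow> 'v)
    \<Rightarrow> ('e \<times> bool \<Rightarrow> 'e \<times> bool) \<Rightarrow> bool" where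
  "rotation_system V E ends rot \<longleftrightarrow>
     bij_betw rot (darts E) (darts E) \<and>
     (\<forall>d \<in> darts E. dart_vertex ends (rot d) = dart_vertex ends d) \<and>
     (\<forall>d \<in> darts E. darts_at E ends (dart_vertex ends d) = {(rot ^^ n) d | n. True})"

definition faces :: "'e set \<Rightarrow> ('e \<times> bool \<Rightarrow> 'e \<times> bool) \<Rightarrow> ('e \<times> bool) set set" where
  "faces E rot = (\<lambda>d. {((rot \<circ> flip) ^^ n) d | n. True}) ` darts E"

definition plane :: "'v set \<Rightarrow> 'e set \<Rightarrow> ('e \<Rightarrow> bool \<Rightarrow> 'v)
    \<Rightarrow> ('e \<times> bool \<Rightarrow> 'e \<times> bool) \<Rightarrow> bool" where
  "plane V E ends rot \<longleftrightarrow>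
     int (card V) - int (card E) + int (card (faces E rot)) = 2 * int (card (components V E ends))"

definition plane_4reg :: "'v set \<Rightarrow> 'e set \<Rightarrow> ('e \<Rightarrow> bool \<Rightarrow> 'v)
    \<Rightarrow> ('e \<times> bool \<Rightarrow> 'e \<times> bool) \<Rightarrow> bool" where
  "plane_4reg V E ends rot \<longleftrightarrow> is_graph V E ends \<and> four_regular V E ends \<and>
     rotation_system V E ends rot \<and> plane V E ends rot"

definition consecutive_pair :: "'e set \<Rightarrow> ('e \<Rightarrow> bool \<Rightarrow> 'v)
    \<Rightarrow> ('e \<times> bool \<Rightarrow> 'e \<times> bool) \<Rightarrow> 'v \<Rightarrow> 'e set \<Rightarrow> bool" where
  "consecutive_pair E ends rot v A \<longleftrightarrow>
     card A = 2 \<and> (\<exists>d \<in> darts_at E ends v. A = {fst d, fst (rot d)})"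

definition is_orientation :: "'e set \<Rightarrow> ('e \<Rightarrow> bool \<Rightarrow> 'v)
    \<Rightarrow> ('e \<times> bool \<Rightarrow> 'e \<times> bool) \<Rightarrow> 'v \<Rightarrow> 'e set set \<Rightarrow> bool" where
  "is_orientation E ends rot v c \<longleftrightarrow>
     (loops_at E ends v = {} \<and>
        (\<exists>A B. c = {A, B} \<and> A \<inter> B = {} \<and> A \<union> B = incident E ends v \<and>
               consecutive_pair E ends rot v A \<and> consecutive_pair E ends rot v B))
   \<or> (\<exists>e f g. loops_at E ends v = {e} \<and> incident E ends v = {e, f, g} \<and> distinct [e, f, g] \<and>
        (c = {{e, f}, {e, g}} \<or> c = {{f, g}, {e}}))
   \<or> (\<exists>e1 e2. e1 \<noteq> e2 \<and> loops_at E ends v = {e1, e2} \<and> c = {{e1, e2}})"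

definition vertex_orientation :: "'v set \<Rightarrow> 'e set \<Rightarrow> ('e \<Rightarrow> bool \<Rightarrow> 'v)
    \<Rightarrow> ('e \<times> bool \<Rightarrow> 'e \<times> bool) \<Rightarrow> ('v \<Rightarrow> 'e set set) \<Rightarrow> bool" where
  "vertex_orientation V E ends rot \<sigma> \<longleftrightarrow> (\<forall>v\<in>V. is_orientation E ends rot v (\<sigma> v))"

text \<open>o-colourings, stated for an incidence structure: vertex set V, edge set E,
  incidence map inc (edges incident with a vertex) and cells \<sigma>.\<close>

definition o_colouring :: "'v set \<Rightarrow> 'e set \<Rightarrow> ('v \<Rightarrow> 'e set) \<Rightarrow> ('v \<Rightarrow> 'e set set)
    \<Rightarrow> ('e \<Rightarrow> 'c) \<Rightarrow> bool" where
  "o_colouring V E inc \<sigma> col \<longleftrightarrow>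
     (\<forall>v\<in>V. card (col ` inc v) = 2 \<and> (\<forall>C\<in>\<sigma> v. \<exists>x\<in>C. \<exists>y\<in>C. col x \<noteq> col y))"

definition k_o_colourable :: "nat \<Rightarrow> 'v set \<Rightarrow> 'e set \<Rightarrow> ('v \<Rightarrow> 'e set) \<Rightarrow> ('v \<Rightarrow> 'e set set) \<Rightarrow> bool" where
  "k_o_colourable k V E inc \<sigma> \<longleftrightarrow>
     (\<exists>col :: 'e \<Rightarrow> nat. o_colouring V E inc \<sigma> col \<and> card (col ` E) \<le> k)"

definition edges_to :: "'e set \<Rightarrow> ('e \<Rightarrow> bool \<Rightarrow> 'v) \<Rightarrow> 'v \<Rightarrow> 'v set \<Rightarrow> 'e set" where
  "edges_to E ends v H = {e \<in> incident E ends v. \<exists>b. ends e b \<in> H}"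

definition transverse_cut :: "'e set \<Rightarrow> ('e \<Rightarrow> bool \<Rightarrow> 'v) \<Rightarrow> ('v \<Rightarrow> 'e set set)
    \<Rightarrow> 'v \<Rightarrow> 'v set \<Rightarrow> 'v set \<Rightarrow> bool" where
  "transverse_cut E ends \<sigma> v H1 H2 \<longleftrightarrow> \<sigma> v \<noteq> {edges_to E ends v H1, edges_to E ends v H2}"

text \<open>Smoothing v towards component H: the graph G_H has vertex set H, the edges of G
  with both ends in H (tagged Some e) and one new edge None, which replaces the two edges
  from v to H; in particular None is incident with exactly the endpoints in H of these
  two edges (a loop if they coincide).\<close>

definition smooth_map :: "'e set \<Rightarrow> 'e \<Rightarrow> 'e option" where
  "smooth_map P e = (if e \<in> P then None else Some e)"

definition smooth_E :: "'e set \<Rightarrow> ('e \<Rightarrow> bool \<Rightarrow> 'v) \<Rightarrow> 'v set \<Rightarrow> 'e option set" where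
  "smooth_E E ends H = insert None (Some ` {e \<in> E. ends e True \<in> H \<and> ends e False \<in> H})"

definition smooth_inc :: "'e set \<Rightarrow> ('e \<Rightarrow> bool \<Rightarrow> 'v) \<Rightarrow> 'v \<Rightarrow> 'v set \<Rightarrow> 'v \<Rightarrow> 'e option set" where
  "smooth_inc E ends v H u = smooth_map (edges_to E ends v H) ` incident E ends u"

definition smooth_sigma :: "'e set \<Rightarrow> ('e \<Rightarrow> bool \<Rightarrow> 'v) \<Rightarrow> ('v \<Rightarrow> 'e set set) \<Rightarrow> 'v \<Rightarrow> 'v set
    \<Rightarrow> 'v \<Rightarrow> 'e option set set" where
  "smooth_sigma E ends \<sigma> v H u = (\<lambda>C. smooth_map (edges_to E ends v H) ` C) ` \<sigma> u"

end

theory Submission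
  imports Defs
begin


lemma palette:
  fixes S1 S2 :: "nat set"
  assumes "finite S1" "finite S2" "card S1 \<le> k" "card S2 \<le> k" "k \<ge> 2" "\<alpha> \<in> S1"
  shows "\<exists>\<pi> T. S1 \<subseteq> T \<and> finite T \<and> card T \<le> k \<and> \<pi> ` S2 \<subseteq> T \<and> inj_on \<pi> S2 \<and> \<pi> \<beta> \<noteq> \<alpha>"
proof -
  obtain B where B: "finite B" "card B = k - card S1" "S1 \<inter> B = {}"
    using finite_arbitrarily_large_disj[of S1 "k - card S1"] assms(1) by auto
  define T where "T = S1 \<union> B"
  have fT: "finite T" using B assms(1) T_def by auto
  have cT: "card T = k" using B assms card_Un_disjoint[of S1 B] T_def by auto
  obtain g where g: "g ` S2 \<subseteq> T" "inj_on g S2" using card_le_inj[OF assms(2) fT] cT assms(4) by auto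
  obtain \<gamma> where \<gamma>: "\<gamma> \<in> T" "\<gamma> \<noteq> \<alpha>"
  proof -
    have "card (T - {\<alpha>}) \<ge> card T - 1" using card_Diff_singleton_if[of T \<alpha>] fT by auto
    then have "card (T - {\<alpha>}) \<ge> 1" using cT assms(5) by linarith
    then have "T - {\<alpha>} \<noteq> {}" by (metis card.empty not_one_le_zero)
    then show ?thesis using that by blast
  qed
  have aT: "\<alpha> \<in> T" using assms(6) T_def by auto
  show ?thesis
  proof (cases "g \<beta> = \<alpha>")
    case False
    then show ?thesis using g fT cT T_def by (intro exI[of _ g] exI[of _ T]) auto
  next
    case True
    define h where "h x = (if g x = \<alpha> then \<gamma> else if g x = \<gamma> then \<alpha> else g x)" for x
    have "h ` S2 \<subseteq> T" using g \<gamma> aT unfolding h_def by auto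
    moreover have "inj_on h S2" using g(2) \<gamma> unfolding h_def inj_on_def by auto
    moreover have "h \<beta> \<noteq> \<alpha>" using True \<gamma> h_def by auto
    ultimately show ?thesis using fT cT T_def by (intro exI[of _ h] exI[of _ T]) auto
  qed
qed

lemma conn_sym: "(x,y) \<in> (conn_rel E ends)\<^sup>* \<Longrightarrow> (y,x) \<in> (conn_rel E ends)\<^sup>*"
proof -
  have "sym (conn_rel E ends)" unfolding sym_def conn_rel_def by blast
  then have "sym ((conn_rel E ends)\<^sup>*)" by (rule sym_rtrancl)
  then show "(x,y) \<in> (conn_rel E ends)\<^sup>* \<Longrightarrow> (y,x) \<in> (conn_rel E ends)\<^sup>*" unfolding sym_def by blast
qed

lemma comp_closed:
  assumes "H \<in> components V' E' ends" "\<forall>e\<in>E'. \<forall>b. ends e b \<in> V'"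
    "ends e b \<in> H" "e \<in> E'"
  shows "ends e c \<in> H"
proof -
  obtain u where u: "u \<in> V'" "H = {w \<in> V'. (u, w) \<in> (conn_rel E' ends)\<^sup>*}"
    using assms(1) unfolding components_def by auto
  have "(ends e b, ends e c) \<in> (conn_rel E' ends)\<^sup>*"
  proof (cases "c = b")
    case False
    then have "(ends e b, ends e c) \<in> conn_rel E' ends" using assms(4)
      unfolding conn_rel_def by (cases b) auto
    then show ?thesis by auto
  qed auto
  then show ?thesis using assms u by (auto intro: rtrancl_trans)
qed

lemma comp_eq:
  assumes "H \<in> components V' E' ends" "H' \<in> components V' E' ends" "x \<in> H" "x \<in> H'"
  shows "H = H'"
proof -
  obtain u where u: "u \<in> V'" "H = {w \<in> V'. (u, w) \<in> (conn_rel E' ends)\<^sup>*}"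
    using assms(1) unfolding components_def by auto
  obtain u' where u': "u' \<in> V'" "H' = {w \<in> V'. (u', w) \<in> (conn_rel E' ends)\<^sup>*}"
    using assms(2) unfolding components_def by auto
  have "(u,u') \<in> (conn_rel E' ends)\<^sup>*" using assms u u' conn_sym[of u' x] by (auto intro: rtrancl_trans)
  then have "(u',u) \<in> (conn_rel E' ends)\<^sup>*" by (rule conn_sym)
  show ?thesis using u u' \<open>(u,u') \<in> _\<close> \<open>(u',u) \<in> _\<close> by (auto intro: rtrancl_trans)
qed

lemma comp_sub: "H \<in> components V' E' ends \<Longrightarrow> H \<subseteq> V'"
  unfolding components_def by auto

lemma comp_self: "u \<in> V' \<Longrightarrow> u \<in> (\<lambda>u. {w \<in> V'. (u, w) \<in> (conn_rel E' ends)\<^sup>*}) u"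
  by auto

lemma comp_cover: "u \<in> V' \<Longrightarrow> \<exists>H\<in>components V' E' ends. u \<in> H"
  unfolding components_def by auto

lemma parity:
  fixes E :: "'e set" and ends :: "'e \<Rightarrow> bool \<Rightarrow> 'v"
  assumes fE: "finite E" and fH: "finite H" and reg: "four_regular V E ends" and HV: "H \<subseteq> V"
    and PE: "P \<subseteq> E"
    and Pu: "\<forall>e\<in>P. \<forall>b c. ends e b \<in> H \<and> ends e c \<in> H \<longrightarrow> b = c"
    and Pe: "\<forall>e\<in>P. \<exists>b. ends e b \<in> H"
    and oth: "\<forall>e\<in>E - P. \<forall>b. ends e b \<in> H \<longrightarrow> (\<forall>c. ends e c \<in> H)"
  shows "even (card P)"
proof -
  define D where "D = {d \<in> darts E. dart_vertex ends d \<in> H}"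
  have D1: "D = (\<Union>u\<in>H. darts_at E ends u)" unfolding D_def darts_at_def by auto
  have fin: "\<forall>u\<in>H. finite (darts_at E ends u)" using fE unfolding darts_at_def darts_def by auto
  have "card D = (\<Sum>u\<in>H. card (darts_at E ends u))" unfolding D1
    by (rule card_UN_disjoint[OF fH fin]) (auto simp: darts_at_def)
  also have "\<dots> = (\<Sum>u\<in>H. 4)" using reg HV unfolding four_regular_def by (intro sum.cong) auto
  finally have cD: "card D = 4 * card H" by simp
  define I where "I = {e\<in>E. \<forall>b. ends e b \<in> H}"
  define Q where "Q = {(e,b). e \<in> P \<and> ends e b \<in> H}"
  have D2: "D = (I \<times> UNIV) \<union> Q"
    proof (intro set_eqI iffI)
    fix d assume "d \<in> D"
    then obtain e b where d: "d = (e,b)" "e \<in> E" "ends e b \<in> H"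
      unfolding D_def darts_def dart_vertex_def by auto
    show "d \<in> (I \<times> UNIV) \<union> Q"
    proof (cases "e \<in> P")
      case True then show ?thesis using d Q_def by auto
    next
      case False then show ?thesis using d oth I_def by auto
    qed
  next
    fix d assume "d \<in> (I \<times> UNIV) \<union> Q"
    then show "d \<in> D" using PE unfolding D_def I_def Q_def darts_def dart_vertex_def by auto
  qed
  have disj: "(I \<times> UNIV) \<inter> Q = {}"
  proof -
    { fix e b assume "e \<in> I" "(e,b) \<in> Q"
      then have "ends e b \<in> H" "ends e (\<not>b) \<in> H" "e \<in> P" unfolding I_def Q_def by auto
      then have "b = (\<not>b)" using Pu by blast
      then have False by simp }
    then show ?thesis by auto
  qed
  have fI: "finite I" using fE I_def by auto
  have fQ: "finite Q"
  proof -
    have "Q \<subseteq> E \<times> UNIV" using PE Q_def by auto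
    then show ?thesis using fE by (auto intro: finite_subset)
  qed
  have cQ: "card Q = card P"
  proof -
    have "inj_on fst Q" unfolding inj_on_def Q_def using Pu by auto
    moreover have "fst ` Q = P" unfolding Q_def using Pe by force
    ultimately have "bij_betw fst Q P" unfolding bij_betw_def by auto
    then show ?thesis by (rule bij_betw_same_card)
  qed
  have cI: "card (I \<times> (UNIV::bool set)) = 2 * card I"
    by (simp add: card_cartesian_product)
  have "card D = 2 * card I + card P"
    unfolding D2 using card_Un_disjoint[of "I \<times> UNIV" Q] fI fQ disj cI cQ by simp
  with cD have "card P = 4 * card H - 2 * card I" by simp
  then show ?thesis by simp
qed



lemma orient_sub:
  assumes "is_orientation E ends rot u c" "C \<in> c"
  shows "C \<subseteq> incident E ends u"
  using assms unfolding is_orientation_def loops_at_def incident_def by blast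

theorem lemma3p2:
  fixes V :: "'v set" and E :: "'e set" and ends :: "'e \<Rightarrow> bool \<Rightarrow> 'v"
    and rot :: "'e \<times> bool \<Rightarrow> 'e \<times> bool" and \<sigma> :: "'v \<Rightarrow> 'e set set"
    and v :: 'v and H1 H2 :: "'v set" and k :: nat
  assumes "plane_4reg V E ends rot"
    and "vertex_orientation V E ends rot \<sigma>"
    and "cut_vertex V E ends v"
    and "loops_at E ends v = {}"
    and "components_del V E ends v = {H1, H2}" and "H1 \<noteq> H2"
    and "transverse_cut E ends \<sigma> v H1 H2"
    and "k \<ge> 2"
    and "k_o_colourable k H1 (smooth_E E ends H1) (smooth_inc E ends v H1) (smooth_sigma E ends \<sigma> v H1)"
    and "k_o_colourable k H2 (smooth_E E ends H2) (smooth_inc E ends v H2) (smooth_sigma E ends \<sigma> v H2)"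
  shows "k_o_colourable k V E (incident E ends) \<sigma>"
proof -
  from assms(1) have fV: "finite V" and fE: "finite E" and endsV: "\<forall>e\<in>E. \<forall>b. ends e b \<in> V"
    and reg: "four_regular V E ends" unfolding plane_4reg_def is_graph_def by auto
  have vV: "v \<in> V" using assms(3) unfolding cut_vertex_def by auto
  define E' where "E' = E - incident E ends v"
  define P1 where "P1 = edges_to E ends v H1"
  define P2 where "P2 = edges_to E ends v H2"
  have E'V: "\<forall>e\<in>E'. \<forall>b. ends e b \<in> V - {v}" using endsV unfolding E'_def incident_def by auto
  have Hc: "H1 \<in> components (V - {v}) E' ends" "H2 \<in> components (V - {v}) E' ends"
    using assms(5) unfolding E'_def components_del_def by auto
  have Hsub: "H1 \<subseteq> V - {v}" "H2 \<subseteq> V - {v}" using comp_sub[OF Hc(1)] comp_sub[OF Hc(2)] by auto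
  have disj: "H1 \<inter> H2 = {}"
  proof (rule ccontr)
    assume "H1 \<inter> H2 \<noteq> {}"
    then obtain x where "x \<in> H1" "x \<in> H2" by blast
    then have "H1 = H2" by (rule comp_eq[OF Hc])
    then show False using assms(6) by simp
  qed
  have cover: "V - {v} = H1 \<union> H2"
  proof (rule equalityI)
    show "V - {v} \<subseteq> H1 \<union> H2"
    proof
      fix u assume "u \<in> V - {v}"
      then obtain H where H: "H \<in> components (V - {v}) E' ends" "u \<in> H" using comp_cover[of u "V - {v}" E' ends] by blast
      have "H \<in> {H1, H2}" using H(1) assms(5) unfolding E'_def components_del_def by simp
      then show "u \<in> H1 \<union> H2" using H(2) by blast
    qed
    show "H1 \<union> H2 \<subseteq> V - {v}" using Hsub by (rule Un_least)
  qed
  have clos1: "\<And>e b c. e \<in> E' \<Longrightarrow> ends e b \<in> H1 \<Longrightarrow> ends e c \<in> H1"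
    using comp_closed[OF Hc(1)] E'V by blast
  have clos2: "\<And>e b c. e \<in> E' \<Longrightarrow> ends e b \<in> H2 \<Longrightarrow> ends e c \<in> H2"
    using comp_closed[OF Hc(2)] E'V by blast
  have noloop: "\<And>e b. e \<in> E \<Longrightarrow> ends e b = v \<Longrightarrow> ends e (\<not>b) \<noteq> v"
  proof -
    fix e b assume "e \<in> E" "ends e b = v" 
    show "ends e (\<not>b) \<noteq> v"
    proof
      assume "ends e (\<not>b) = v"
      then have "e \<in> loops_at E ends v" using \<open>e \<in> E\<close> \<open>ends e b = v\<close> unfolding loops_at_def by (cases b) auto
      then show False using assms(4) by auto
    qed
  qed
  have incv: "\<And>e. e \<in> incident E ends v \<Longrightarrow> \<exists>b. ends e b = v \<and> ends e (\<not>b) \<in> H1 \<union> H2"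
  proof -
    fix e assume "e \<in> incident E ends v"
    then obtain b where "e \<in> E" "ends e b = v" unfolding incident_def by auto
    then show "\<exists>b. ends e b = v \<and> ends e (\<not>b) \<in> H1 \<union> H2"
      using noloop endsV cover by blast
  qed
  have incP: "incident E ends v = P1 \<union> P2"
  proof
    show "incident E ends v \<subseteq> P1 \<union> P2"
      using incv unfolding P1_def P2_def edges_to_def by blast
  qed (auto simp: P1_def P2_def edges_to_def)
  have Pdisj: "P1 \<inter> P2 = {}"
  proof -
    { fix e assume "e \<in> P1" "e \<in> P2"
      then obtain b c where bc: "ends e b \<in> H1" "ends e c \<in> H2" "e \<in> incident E ends v"
        unfolding P1_def P2_def edges_to_def by auto
      then obtain d where d: "ends e d = v" "ends e (\<not>d) \<in> H1 \<union> H2" using incv by blast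
      have "b \<noteq> d" "c \<noteq> d" using bc d Hsub by auto
      then have "b = c" by auto
      then have False using bc disj by auto }
    then show ?thesis by auto
  qed
  have fin_inc: "finite (incident E ends v)" using fE unfolding incident_def by auto
  have card_inc: "card (incident E ends v) = 4"
  proof -
    have "bij_betw fst (darts_at E ends v) (incident E ends v)"
    proof -
      have "inj_on fst (darts_at E ends v)"
      proof (rule inj_onI)
        fix x y assume xy: "x \<in> darts_at E ends v" "y \<in> darts_at E ends v" "fst x = fst y"
        obtain e b c where "x = (e,b)" "y = (e,c)" using xy(3) by (cases x, cases y) auto
        moreover have "b = c"
        proof (rule ccontr)
          assume "b \<noteq> c"
          then have "c = (\<not>b)" by auto
          then show False using xy noloop \<open>x = (e,b)\<close> \<open>y = (e,c)\<close>
            unfolding darts_at_def darts_def dart_vertex_def by auto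
        qed
        ultimately show "x = y" by simp
      qed
      moreover have "fst ` darts_at E ends v = incident E ends v"
        unfolding darts_at_def darts_def dart_vertex_def incident_def by force
      ultimately show ?thesis unfolding bij_betw_def by auto
    qed
    then have "card (incident E ends v) = card (darts_at E ends v)" by (simp add: bij_betw_same_card)
    then show ?thesis using reg vV unfolding four_regular_def by auto
  qed
  have nonempty: "\<And>H. H \<in> {H1, H2} \<Longrightarrow> edges_to E ends v H \<noteq> {}"
  proof
    fix H assume HH: "H \<in> {H1, H2}" and emp: "edges_to E ends v H = {}"
    have Hc': "H \<in> components (V - {v}) E' ends" using HH Hc by auto
    have clos: "\<And>e b c. e \<in> E' \<Longrightarrow> ends e b \<in> H \<Longrightarrow> ends e c \<in> H"
      using comp_closed[OF Hc'] E'V by blast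
    obtain u0 where u0: "u0 \<in> V - {v}" "H = {w \<in> V - {v}. (u0, w) \<in> (conn_rel E' ends)\<^sup>*}"
      using Hc' unfolding components_def by auto
    have reach: "(u0, w) \<in> (conn_rel E ends)\<^sup>* \<Longrightarrow> w \<in> H" for w
    proof (induction rule: rtrancl_induct)
      case base then show ?case using u0 by auto
    next
      case (step w x)
      then obtain e b where eb: "e \<in> E" "ends e b = w" "ends e (\<not>b) = x"
        unfolding conn_rel_def by auto
      have "e \<notin> incident E ends v"
      proof
        assume "e \<in> incident E ends v"
        then have "e \<in> edges_to E ends v H" using eb step.IH unfolding edges_to_def by auto
        then show False using emp by auto
      qed
      then have "e \<in> E'" using eb E'_def by auto
      then show ?case using clos eb step.IH by blast
    qed
    define K where "K = {w \<in> V. (u0, w) \<in> (conn_rel E ends)\<^sup>*}"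
    define Kv where "Kv = {w \<in> V. (v, w) \<in> (conn_rel E ends)\<^sup>*}"
    have "K \<in> components V E ends" "Kv \<in> components V E ends"
      using u0 vV unfolding K_def Kv_def components_def by auto
    moreover have "v \<in> Kv" using vV Kv_def by auto
    moreover have "v \<notin> K" using reach u0 K_def by auto
    ultimately have "{K, Kv} \<subseteq> components V E ends" "K \<noteq> Kv" by auto
    moreover have "finite (components V E ends)" using fV unfolding components_def by auto
    ultimately have "card {K, Kv} \<le> card (components V E ends)" by (intro card_mono)
    then have "card (components V E ends) \<ge> 2" using \<open>K \<noteq> Kv\<close> by auto
    moreover have "card (components_del V E ends v) = 2" using assms(5,6) by auto
    ultimately show False using assms(3) unfolding cut_vertex_def by auto
  qed
  have evenP1: "even (card P1)"
  proof (rule parity[OF fE _ reg])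
    show "finite H1" using Hsub fV finite_subset by blast
    show "H1 \<subseteq> V" using Hsub by auto
    show "P1 \<subseteq> E" unfolding P1_def edges_to_def incident_def by auto
    show "\<forall>e\<in>P1. \<exists>b. ends e b \<in> H1" unfolding P1_def edges_to_def by auto
    show "\<forall>e\<in>P1. \<forall>b c. ends e b \<in> H1 \<and> ends e c \<in> H1 \<longrightarrow> b = c"
    proof (intro ballI allI impI)
      fix e b c assume "e \<in> P1" "ends e b \<in> H1 \<and> ends e c \<in> H1"
      moreover obtain d where "ends e d = v" using \<open>e \<in> P1\<close> unfolding P1_def edges_to_def incident_def by auto
      ultimately have "b \<noteq> d" "c \<noteq> d" using Hsub by auto
      then show "b = c" by auto
    qed
    show "\<forall>e\<in>E - P1. \<forall>b. ends e b \<in> H1 \<longrightarrow> (\<forall>c. ends e c \<in> H1)"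
    proof (intro ballI allI impI)
      fix e b c assume "e \<in> E - P1" "ends e b \<in> H1"
      then have "e \<in> E'" unfolding E'_def P1_def edges_to_def by auto
      then show "ends e c \<in> H1" using clos1 \<open>ends e b \<in> H1\<close> by blast
    qed
  qed
  have cP: "card P1 = 2" "card P2 = 2"
  proof -
    have f: "finite P1" "finite P2" using fin_inc incP by auto
    have s: "card P1 + card P2 = 4" using card_Un_disjoint[OF f Pdisj] incP card_inc by simp
    have "card P1 \<noteq> 0" "card P2 \<noteq> 0" using nonempty f unfolding P1_def P2_def by auto
    then show "card P1 = 2" "card P2 = 2" using s evenP1 by presburger+
  qed
  define SE1 where "SE1 = smooth_E E ends H1"
  define SE2 where "SE2 = smooth_E E ends H2"
  obtain c1 :: "'e option \<Rightarrow> nat" where c1: "o_colouring H1 SE1 (smooth_inc E ends v H1) (smooth_sigma E ends \<sigma> v H1) c1"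
    "card (c1 ` SE1) \<le> k" using assms(9) unfolding k_o_colourable_def SE1_def by blast
  obtain c2 :: "'e option \<Rightarrow> nat" where c2: "o_colouring H2 SE2 (smooth_inc E ends v H2) (smooth_sigma E ends \<sigma> v H2) c2"
    "card (c2 ` SE2) \<le> k" using assms(10) unfolding k_o_colourable_def SE2_def by blast
  have fSE: "finite SE1" "finite SE2" using fE unfolding SE1_def SE2_def smooth_E_def by auto
  obtain \<pi> T where pT: "c1 ` SE1 \<subseteq> T" "finite T" "card T \<le> k" "\<pi> ` (c2 ` SE2) \<subseteq> T"
    "inj_on \<pi> (c2 ` SE2)" "\<pi> (c2 None) \<noteq> c1 None"
    using palette[of "c1 ` SE1" "c2 ` SE2" k "c1 None" "c2 None"] fSE c1(2) c2(2) assms(8)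
    unfolding SE1_def smooth_E_def by auto
  define col where "col e = (if \<exists>b. ends e b \<in> H1 then c1 (smooth_map P1 e) else \<pi> (c2 (smooth_map P2 e)))" for e
  have inSE1: "\<And>e b. e \<in> E \<Longrightarrow> ends e b \<in> H1 \<Longrightarrow> smooth_map P1 e \<in> SE1"
  proof -
    fix e b assume e: "e \<in> E" "ends e b \<in> H1"
    show "smooth_map P1 e \<in> SE1"
    proof (cases "e \<in> P1")
      case True then show ?thesis unfolding smooth_map_def SE1_def smooth_E_def by auto
    next
      case False
      then have "e \<in> E'" using e unfolding E'_def P1_def edges_to_def by auto
      then have "ends e True \<in> H1" "ends e False \<in> H1" using clos1 e by blast+
      then show ?thesis using False e unfolding smooth_map_def SE1_def smooth_E_def by auto
    qed
  qed
  have noH1: "\<And>e b. e \<in> E \<Longrightarrow> ends e b \<in> H2 \<Longrightarrow> \<not> (\<exists>c. ends e c \<in> H1)"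
  proof -
    fix e b assume e: "e \<in> E" "ends e b \<in> H2"
    show "\<not> (\<exists>c. ends e c \<in> H1)"
    proof (cases "e \<in> incident E ends v")
      case True
      then obtain d where d: "ends e d = v" "ends e (\<not>d) \<in> H1 \<union> H2" using incv by blast
      have "b \<noteq> d" using d e Hsub by auto
      then have "b = (\<not>d)" by auto
      show ?thesis
      proof
        assume "\<exists>c. ends e c \<in> H1"
        then obtain c where c: "ends e c \<in> H1" by blast
        show False
        proof (cases "c = d")
          case True then show False using c d Hsub by auto
        next
          case False
          then have "c = b" using \<open>b = (\<not>d)\<close> by auto
          then show False using c e disj by auto
        qed
      qed
    next
      case False
      then have "e \<in> E'" using e E'_def by auto
      then show ?thesis using clos2 e disj by blast
    qed
  qed
  have inSE2: "\<And>e b. e \<in> E \<Longrightarrow> ends e b \<in> H2 \<Longrightarrow> smooth_map P2 e \<in> SE2"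
  proof -
    fix e b assume e: "e \<in> E" "ends e b \<in> H2"
    show "smooth_map P2 e \<in> SE2"
    proof (cases "e \<in> P2")
      case True then show ?thesis unfolding smooth_map_def SE2_def smooth_E_def by auto
    next
      case False
      then have "e \<in> E'" using e unfolding E'_def P2_def edges_to_def by auto
      then have "ends e True \<in> H2" "ends e False \<in> H2" using clos2 e by blast+
      then show ?thesis using False e unfolding smooth_map_def SE2_def smooth_E_def by auto
    qed
  qed
  have colT: "col ` E \<subseteq> T"
  proof
    fix x assume "x \<in> col ` E"
    then obtain e where e: "e \<in> E" "x = col e" by auto
    show "x \<in> T"
    proof (cases "\<exists>b. ends e b \<in> H1")
      case True
      then obtain b where "ends e b \<in> H1" by auto
      then show ?thesis using inSE1 e True pT(1) unfolding col_def by auto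
    next
      case False
      have "\<exists>b. ends e b \<in> H2"
      proof (cases "e \<in> incident E ends v")
        case True then show ?thesis using incv False by blast
      next
        case nv: False
        then have "ends e True \<in> V - {v}" using e E'V E'_def by auto
        then show ?thesis using cover False by blast
      qed
      then obtain b where "ends e b \<in> H2" by auto
      then show ?thesis using inSE2 e False pT(4) unfolding col_def by auto
    qed
  qed
  have orient: "\<And>u. u \<in> V \<Longrightarrow> is_orientation E ends rot u (\<sigma> u)"
    using assms(2) unfolding vertex_orientation_def by auto
  have o: "o_colouring V E (incident E ends) \<sigma> col"
    unfolding o_colouring_def
  proof (intro ballI)
    fix u assume uV: "u \<in> V"
    consider "u = v" | "u \<in> H1" | "u \<in> H2" using uV cover by blast
    then show "card (col ` incident E ends u) = 2 \<and> (\<forall>C\<in>\<sigma> u. \<exists>x\<in>C. \<exists>y\<in>C. col x \<noteq> col y)"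
    proof cases
      case 2
      have ceq: "\<And>e. e \<in> incident E ends u \<Longrightarrow> col e = c1 (smooth_map P1 e)"
      proof -
        fix e assume "e \<in> incident E ends u"
        then obtain b where "ends e b = u" unfolding incident_def by blast
        then have "\<exists>b. ends e b \<in> H1" using 2 by blast
        then show "col e = c1 (smooth_map P1 e)" unfolding col_def by simp
      qed
      have "col ` incident E ends u = (c1 \<circ> smooth_map P1) ` incident E ends u"
        using ceq by (intro image_cong) simp_all
      also have "\<dots> = c1 ` smooth_inc E ends v H1 u"
        unfolding smooth_inc_def P1_def image_comp ..
      finally have ieq: "col ` incident E ends u = c1 ` smooth_inc E ends v H1 u" .
      have oc1: "card (c1 ` smooth_inc E ends v H1 u) = 2"
        "\<forall>C\<in>smooth_sigma E ends \<sigma> v H1 u. \<exists>x\<in>C. \<exists>y\<in>C. c1 x \<noteq> c1 y"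
        using c1(1) 2 unfolding o_colouring_def by blast+
      have "\<forall>C\<in>\<sigma> u. \<exists>x\<in>C. \<exists>y\<in>C. col x \<noteq> col y"
      proof
        fix C assume C: "C \<in> \<sigma> u"
        have Cs: "C \<subseteq> incident E ends u" using orient_sub[OF orient[OF uV] C] .
        have "smooth_map P1 ` C \<in> smooth_sigma E ends \<sigma> v H1 u"
          using C unfolding smooth_sigma_def P1_def by blast
        then obtain x' y' where "x' \<in> smooth_map P1 ` C" "y' \<in> smooth_map P1 ` C" "c1 x' \<noteq> c1 y'"
          using oc1(2) by blast
        then obtain x y where xy: "x \<in> C" "y \<in> C" "c1 (smooth_map P1 x) \<noteq> c1 (smooth_map P1 y)"
          by blast
        have "col x \<noteq> col y" using xy Cs ceq by (metis subsetD)
        then show "\<exists>x\<in>C. \<exists>y\<in>C. col x \<noteq> col y" using xy by blast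
      qed
      then show ?thesis using ieq oc1(1) by simp
    next
      case 3
      have ceq: "\<And>e. e \<in> incident E ends u \<Longrightarrow> col e = \<pi> (c2 (smooth_map P2 e))"
      proof -
        fix e assume "e \<in> incident E ends u"
        then obtain b where "ends e b = u" "e \<in> E" unfolding incident_def by blast
        then have "\<not> (\<exists>b. ends e b \<in> H1)" using 3 noH1 by blast
        then show "col e = \<pi> (c2 (smooth_map P2 e))" unfolding col_def by simp
      qed
      have sub: "smooth_inc E ends v H2 u \<subseteq> SE2"
      proof
        fix x assume "x \<in> smooth_inc E ends v H2 u"
        then obtain e where "e \<in> incident E ends u" "x = smooth_map P2 e"
          unfolding smooth_inc_def P2_def by blast
        then obtain b where "ends e b = u" "e \<in> E" "x = smooth_map P2 e" unfolding incident_def by blast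
        then show "x \<in> SE2" using inSE2 3 by blast
      qed
      have "col ` incident E ends u = (\<pi> \<circ> (c2 \<circ> smooth_map P2)) ` incident E ends u"
        using ceq by (intro image_cong) simp_all
      also have "\<dots> = \<pi> ` c2 ` smooth_inc E ends v H2 u"
        unfolding smooth_inc_def P2_def image_comp ..
      finally have ieq: "col ` incident E ends u = \<pi> ` c2 ` smooth_inc E ends v H2 u" .
      have injs: "inj_on \<pi> (c2 ` smooth_inc E ends v H2 u)"
        using inj_on_subset[OF pT(5) image_mono[OF sub]] .
      have oc2: "card (c2 ` smooth_inc E ends v H2 u) = 2"
        "\<forall>C\<in>smooth_sigma E ends \<sigma> v H2 u. \<exists>x\<in>C. \<exists>y\<in>C. c2 x \<noteq> c2 y"
        using c2(1) 3 unfolding o_colouring_def by blast+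
      have card2: "card (col ` incident E ends u) = 2"
        using ieq card_image[OF injs] oc2(1) by simp
      have "\<forall>C\<in>\<sigma> u. \<exists>x\<in>C. \<exists>y\<in>C. col x \<noteq> col y"
      proof
        fix C assume C: "C \<in> \<sigma> u"
        have Cs: "C \<subseteq> incident E ends u" using orient_sub[OF orient[OF uV] C] .
        have "smooth_map P2 ` C \<in> smooth_sigma E ends \<sigma> v H2 u"
          using C unfolding smooth_sigma_def P2_def by blast
        then obtain x' y' where "x' \<in> smooth_map P2 ` C" "y' \<in> smooth_map P2 ` C" "c2 x' \<noteq> c2 y'"
          using oc2(2) by blast
        then obtain x y where xy: "x \<in> C" "y \<in> C" "c2 (smooth_map P2 x) \<noteq> c2 (smooth_map P2 y)"
          by blast
        have "smooth_map P2 x \<in> smooth_inc E ends v H2 u" "smooth_map P2 y \<in> smooth_inc E ends v H2 u"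
          using xy Cs unfolding smooth_inc_def P2_def by blast+
        then have "\<pi> (c2 (smooth_map P2 x)) \<noteq> \<pi> (c2 (smooth_map P2 y))"
          using xy(3) injs unfolding inj_on_def by blast
        then have "col x \<noteq> col y" using xy Cs ceq by (metis subsetD)
        then show "\<exists>x\<in>C. \<exists>y\<in>C. col x \<noteq> col y" using xy by blast
      qed
      then show ?thesis using card2 by simp
    next
      case 1
      have col1: "\<And>e. e \<in> P1 \<Longrightarrow> col e = c1 None"
        unfolding col_def P1_def edges_to_def smooth_map_def by auto
      have col2: "\<And>e. e \<in> P2 \<Longrightarrow> col e = \<pi> (c2 None)"
      proof -
        fix e assume e: "e \<in> P2"
        then obtain b where "ends e b \<in> H2" "e \<in> E" unfolding P2_def edges_to_def incident_def by auto
        then have "\<not> (\<exists>c. ends e c \<in> H1)" using noH1 by blast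
        then show "col e = \<pi> (c2 None)" using e unfolding col_def smooth_map_def by auto
      qed
      have ne: "P1 \<noteq> {}" "P2 \<noteq> {}" using cP by auto
      have "col ` incident E ends u = {c1 None, \<pi> (c2 None)}"
      proof
        show "col ` incident E ends u \<subseteq> {c1 None, \<pi> (c2 None)}"
          using 1 incP col1 col2 by auto
        show "{c1 None, \<pi> (c2 None)} \<subseteq> col ` incident E ends u"
          using 1 incP col1 col2 ne by force
      qed
      then have card2: "card (col ` incident E ends u) = 2" using pT(6) by auto
      have lv: "loops_at E ends v = {}" by (rule assms(4))
      obtain A B where AB: "\<sigma> v = {A, B}" "A \<inter> B = {}" "A \<union> B = incident E ends v"
        "consecutive_pair E ends rot v A" "consecutive_pair E ends rot v B"
        using orient[OF vV] lv unfolding is_orientation_def by auto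
      have cAB: "card A = 2" "card B = 2" using AB(4,5) unfolding consecutive_pair_def by auto
      have fP: "finite P1" "finite P2" using fin_inc incP by auto
      have tr: "\<sigma> v \<noteq> {P1, P2}" using assms(7) unfolding transverse_cut_def P1_def P2_def by auto
      have key: "\<And>X Y. {X, Y} = {A, B} \<Longrightarrow> card X = 2 \<Longrightarrow> X \<inter> Y = {} \<Longrightarrow> X \<union> Y = P1 \<union> P2
                  \<Longrightarrow> X \<inter> P1 \<noteq> {} \<and> X \<inter> P2 \<noteq> {}"
      proof -
        fix X Y assume XY: "{X, Y} = {A, B}" "card X = 2" "X \<inter> Y = {}" "X \<union> Y = P1 \<union> P2"
        show "X \<inter> P1 \<noteq> {} \<and> X \<inter> P2 \<noteq> {}"
        proof (rule ccontr)
          assume "\<not> (X \<inter> P1 \<noteq> {} \<and> X \<inter> P2 \<noteq> {})"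
          then consider "X \<subseteq> P2" | "X \<subseteq> P1" using XY(4) by blast
          then show False
          proof cases
            case 1
            then have "X = P2" using card_subset_eq[OF fP(2) 1] XY(2) cP by auto
            then have "Y = P1" using XY(3,4) Pdisj by blast
            then show False using tr AB(1) XY(1) \<open>X = P2\<close> by (metis insert_commute)
          next
            case 2
            then have "X = P1" using card_subset_eq[OF fP(1) 2] XY(2) cP by auto
            then have "Y = P2" using XY(3,4) Pdisj by blast
            then show False using tr AB(1) XY(1) \<open>X = P1\<close> by metis
          qed
        qed
      qed
      have kA: "A \<inter> P1 \<noteq> {} \<and> A \<inter> P2 \<noteq> {}" using key[of A B] AB cAB incP by auto
      have kB: "B \<inter> P1 \<noteq> {} \<and> B \<inter> P2 \<noteq> {}" using key[of B A] AB cAB incP by (auto simp: insert_commute)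
      have "\<forall>C\<in>\<sigma> v. \<exists>x\<in>C. \<exists>y\<in>C. col x \<noteq> col y"
      proof
        fix C assume "C \<in> \<sigma> v"
        then have "C \<inter> P1 \<noteq> {} \<and> C \<inter> P2 \<noteq> {}" using kA kB AB(1) by auto
        then obtain x y where "x \<in> C" "x \<in> P1" "y \<in> C" "y \<in> P2" by blast
        then show "\<exists>x\<in>C. \<exists>y\<in>C. col x \<noteq> col y" using col1 col2 pT(6) by metis
      qed
      then show ?thesis using card2 1 by auto
    qed
  qed
  show ?thesis unfolding k_o_colourable_def
    using o colT card_mono[OF pT(2) colT] pT(3) by auto
qed

end
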